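(* Let $(\mathcal{S},\mathcal{A},\tau,\mu_0,\gamma)$ be fixed, and fix a selection rule $g$ assigning to each nonempty $B\subseteq\mathcal{A}$ a distribution $g(B)\in\Delta(\mathcal{A})$ with support exactly $B$. For a reward function $R$, let $\pi_R(s)=g(\arg\max_a A^\star_R(s,a))$ (a maximally supportive optimal policy), let $\Delta_R$ be the distribution over trajectories obtained by drawing $S_0\sim\mu_0$ and following $\pi_R$ with transitions from $\tau$, and let $\mathfrak{S}_R$ be the set of states visited with positive probability under $\Delta_R$. Let $\mathfrak{O}_R$ be the set of functions $\mathcal{O}:\mathcal{S}\to\mathcal{P}(\mathcal{A})\setminus\{\emptyset\}$ with $\mathcal{O}(s)=\arg\max_a A^\star_R(s,a)$ for all $s\in\mathfrak{S}_R$. Then for all reward functions $R,R'$: $\Delta_R=\Delta_{R'}$ if and only if $R'$ is produced from $R$ by an optimality-preserving transformation with some $\mathcal{O}\in\mathfrak{O}_R$.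
   Context: An MDP is $(\mathcal{S},\mathcal{A},\tau,\mu_0,R,\gamma)$ with finite $\mathcal{S},\mathcal{A}$, $\tau:\mathcal{S}\times\mathcal{A}\to\Delta(\mathcal{S})$, $\mu_0\in\Delta(\mathcal{S})$, $R:\mathcal{S}\times\mathcal{A}\times\mathcal{S}\to\mathbb{R}$, $\gamma\in(0,1)$. $A^\star_R$ is the optimal advantage function for reward $R$ ($Q^\star-V^\star$ of a policy maximising $\mathbb{E}_{S_0\sim\mu_0}[V^\pi(S_0)]$). A maximally supportive optimal policy gives positive probability to all optimal actions in every state; it is assumed its action probabilities in each state depend only on the set of optimal actions there (formalised by $g$). Given $\mathcal{O}:\mathcal{S}\to\mathcal{P}(\mathcal{A})\setminus\{\emptyset\}$, $R'$ is produced from $R$ by an optimality-preserving transformation with $\mathcal{O}$ if there exists $\Psi:\mathcal{S}\to\mathbb{R}$ with $\mathbb{E}_{S'\sim\tau(s,a)}[R'(s,a,S')+\gamma\Psi(S')]\le\Psi(s)$ for all $s,a$, with equality iff $a\in\mathcal{O}(s)$. *)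

theory Defs
  imports "HOL-Probability.Probability"
begin

fun value_n :: "('s \<Rightarrow> 'a \<Rightarrow> 's pmf) \<Rightarrow> real \<Rightarrow> ('s \<Rightarrow> 'a \<Rightarrow> 's \<Rightarrow> real)
    \<Rightarrow> ('s \<Rightarrow> 'a pmf) \<Rightarrow> nat \<Rightarrow> 's \<Rightarrow> real" where
  "value_n tau \<gamma> R \<pi> 0 s = 0"
| "value_n tau \<gamma> R \<pi> (Suc n) s =
     measure_pmf.expectation (\<pi> s) (\<lambda>a.
       measure_pmf.expectation (tau s a) (\<lambda>s'. R s a s' + \<gamma> * value_n tau \<gamma> R \<pi> n s'))"

definition value_fun :: "('s \<Rightarrow> 'a \<Rightarrow> 's pmf) \<Rightarrow> real \<Rightarrow> ('s \<Rightarrow> 'a \<Rightarrow> 's \<Rightarrow> real)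
    \<Rightarrow> ('s \<Rightarrow> 'a pmf) \<Rightarrow> 's \<Rightarrow> real" where
  "value_fun tau \<gamma> R \<pi> s = lim (\<lambda>n. value_n tau \<gamma> R \<pi> n s)"

definition opt_value :: "('s \<Rightarrow> 'a \<Rightarrow> 's pmf) \<Rightarrow> real \<Rightarrow> ('s \<Rightarrow> 'a \<Rightarrow> 's \<Rightarrow> real)
    \<Rightarrow> 's \<Rightarrow> real" where
  "opt_value tau \<gamma> R s = (SUP \<pi>. value_fun tau \<gamma> R \<pi> s)"

definition opt_Q :: "('s \<Rightarrow> 'a \<Rightarrow> 's pmf) \<Rightarrow> real \<Rightarrow> ('s \<Rightarrow> 'a \<Rightarrow> 's \<Rightarrow> real)
    \<Rightarrow> 's \<Rightarrow> 'a \<Rightarrow> real" where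
  "opt_Q tau \<gamma> R s a =
     measure_pmf.expectation (tau s a) (\<lambda>s'. R s a s' + \<gamma> * opt_value tau \<gamma> R s')"

definition opt_adv :: "('s \<Rightarrow> 'a \<Rightarrow> 's pmf) \<Rightarrow> real \<Rightarrow> ('s \<Rightarrow> 'a \<Rightarrow> 's \<Rightarrow> real)
    \<Rightarrow> 's \<Rightarrow> 'a \<Rightarrow> real" where
  "opt_adv tau \<gamma> R s a = opt_Q tau \<gamma> R s a - opt_value tau \<gamma> R s"

definition opt_actions :: "('s \<Rightarrow> 'a \<Rightarrow> 's pmf) \<Rightarrow> real \<Rightarrow> ('s \<Rightarrow> 'a \<Rightarrow> 's \<Rightarrow> real)
    \<Rightarrow> 's \<Rightarrow> 'a set" where
  "opt_actions tau \<gamma> R s = {a. \<forall>b. opt_adv tau \<gamma> R s b \<le> opt_adv tau \<gamma> R s a}"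

definition selection_rule :: "('a set \<Rightarrow> 'a pmf) \<Rightarrow> bool" where
  "selection_rule g \<longleftrightarrow> (\<forall>B. B \<noteq> {} \<longrightarrow> set_pmf (g B) = B)"

definition ms_policy :: "('a set \<Rightarrow> 'a pmf) \<Rightarrow> ('s \<Rightarrow> 'a \<Rightarrow> 's pmf) \<Rightarrow> real
    \<Rightarrow> ('s \<Rightarrow> 'a \<Rightarrow> 's \<Rightarrow> real) \<Rightarrow> 's \<Rightarrow> 'a pmf" where
  "ms_policy g tau \<gamma> R s = g (opt_actions tau \<gamma> R s)"

text \<open>The trajectory distribution is represented by the family of all its
  finite-prefix marginals (which determine it uniquely).\<close>
fun traj_prefix :: "('s \<Rightarrow> 'a \<Rightarrow> 's pmf) \<Rightarrow> ('s \<Rightarrow> 'a pmf) \<Rightarrow> nat \<Rightarrow> 's pmf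
    \<Rightarrow> ('s \<times> 'a) list pmf" where
  "traj_prefix tau \<pi> 0 d = return_pmf []"
| "traj_prefix tau \<pi> (Suc n) d =
     do { s \<leftarrow> d; a \<leftarrow> \<pi> s; rest \<leftarrow> traj_prefix tau \<pi> n (tau s a);
          return_pmf ((s, a) # rest) }"

definition traj_dist :: "('a set \<Rightarrow> 'a pmf) \<Rightarrow> ('s \<Rightarrow> 'a \<Rightarrow> 's pmf) \<Rightarrow> 's pmf \<Rightarrow> real
    \<Rightarrow> ('s \<Rightarrow> 'a \<Rightarrow> 's \<Rightarrow> real) \<Rightarrow> nat \<Rightarrow> ('s \<times> 'a) list pmf" where
  "traj_dist g tau mu0 \<gamma> R n = traj_prefix tau (ms_policy g tau \<gamma> R) n mu0"

definition visited_states :: "('a set \<Rightarrow> 'a pmf) \<Rightarrow> ('s \<Rightarrow> 'a \<Rightarrow> 's pmf) \<Rightarrow> 's pmf \<Rightarrow> real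
    \<Rightarrow> ('s \<Rightarrow> 'a \<Rightarrow> 's \<Rightarrow> real) \<Rightarrow> 's set" where
  "visited_states g tau mu0 \<gamma> R =
     {s. \<exists>n. \<exists>xs \<in> set_pmf (traj_dist g tau mu0 \<gamma> R n). s \<in> fst ` set xs}"

definition admissible_O :: "('a set \<Rightarrow> 'a pmf) \<Rightarrow> ('s \<Rightarrow> 'a \<Rightarrow> 's pmf) \<Rightarrow> 's pmf \<Rightarrow> real
    \<Rightarrow> ('s \<Rightarrow> 'a \<Rightarrow> 's \<Rightarrow> real) \<Rightarrow> ('s \<Rightarrow> 'a set) set" where
  "admissible_O g tau mu0 \<gamma> R =
     {Ob. (\<forall>s. Ob s \<noteq> {}) \<and>
         (\<forall>s \<in> visited_states g tau mu0 \<gamma> R. Ob s = opt_actions tau \<gamma> R s)}"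

definition opt_preserving :: "('s \<Rightarrow> 'a \<Rightarrow> 's pmf) \<Rightarrow> real \<Rightarrow> ('s \<Rightarrow> 'a set)
    \<Rightarrow> ('s \<Rightarrow> 'a \<Rightarrow> 's \<Rightarrow> real) \<Rightarrow> ('s \<Rightarrow> 'a \<Rightarrow> 's \<Rightarrow> real) \<Rightarrow> bool" where
  "opt_preserving tau \<gamma> Ob R R' \<longleftrightarrow>
     (\<exists>\<Psi> :: 's \<Rightarrow> real. \<forall>s a.
        measure_pmf.expectation (tau s a) (\<lambda>s'. R' s a s' + \<gamma> * \<Psi> s') \<le> \<Psi> s \<and>
        (measure_pmf.expectation (tau s a) (\<lambda>s'. R' s a s' + \<gamma> * \<Psi> s') = \<Psi> s
           \<longleftrightarrow> a \<in> Ob s))"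

end

theory Submission
  imports Defs
begin

definition contr :: "(('s \<Rightarrow> real) \<Rightarrow> ('s \<Rightarrow> real)) \<Rightarrow> real \<Rightarrow> bool" where
  "contr F c \<longleftrightarrow> (\<forall>U V B. (\<forall>s. \<bar>U s - V s\<bar> \<le> B) \<longrightarrow> (\<forall>s. \<bar>F U s - F V s\<bar> \<le> c * B))"

lemma iter_bound:
  assumes "contr F c" "F W = W" "\<forall>s. \<bar>V0 s - W s\<bar> \<le> B"
  shows "\<bar>(F^^n) V0 s - W s\<bar> \<le> c^n * B"
proof (induction n arbitrary: s)
  case 0 then show ?case using assms by simp
next
  case (Suc n)
  have "\<bar>F ((F^^n) V0) s - F W s\<bar> \<le> c * (c^n * B)"
    using assms(1) Suc unfolding contr_def by blast
  then show ?case using assms(2) by simp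
qed

lemma pow_bound_zero:
  fixes c :: real
  assumes "0 \<le> c" "c < 1" "\<forall>n. x \<le> c^n * K"
  shows "x \<le> 0"
proof -
  have "(\<lambda>n. c^n * K) \<longlonglongrightarrow> 0"
    using assms by (intro tendsto_mult_left_zero LIMSEQ_power_zero) auto
  then show ?thesis using assms(3) by (intro LIMSEQ_le_const2[of _ _ ] ) (auto intro!: LIMSEQ_le_const)
qed

lemma funpow_fix: "F U = U \<Longrightarrow> (F^^n) U = U"
  by (induction n) auto

lemma fix_unique:
  fixes F :: "('s::finite \<Rightarrow> real) \<Rightarrow> ('s \<Rightarrow> real)"
  assumes "0 \<le> c" "c < 1" "contr F c" "F U = U" "F W = W"
  shows "U = W"
proof
  fix s
  define B where "B = (\<Sum>t\<in>UNIV. \<bar>U t - W t\<bar>)"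
  have hB: "\<forall>t. \<bar>U t - W t\<bar> \<le> B"
    unfolding B_def by (auto intro: member_le_sum)
  have "\<forall>n. \<bar>U s - W s\<bar> \<le> c^n * B"
    using iter_bound[OF assms(3,5) hB] funpow_fix[of F U, OF assms(4)] by metis
  then have "\<bar>U s - W s\<bar> \<le> 0" using pow_bound_zero assms by blast
  then show "U s = W s" by simp
qed

lemma fix_exists:
  fixes F :: "('s::finite \<Rightarrow> real) \<Rightarrow> ('s \<Rightarrow> real)"
  assumes c0: "0 \<le> c" and c1: "c < 1" and cF: "contr F c"
  shows "\<exists>W. F W = W"
proof -
  define x where "x n = (F^^n) (\<lambda>_. 0)" for n
  define C where "C = (\<Sum>t\<in>UNIV. \<bar>x 1 t - x 0 t\<bar>)"
  have C0: "C \<ge> 0" unfolding C_def by (auto intro: sum_nonneg)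
  have xs: "x (Suc n) = F (x n)" for n unfolding x_def by simp
  have step: "\<forall>s. \<bar>x (Suc n) s - x n s\<bar> \<le> c^n * C" for n
  proof (induction n)
    case 0 then show ?case unfolding C_def by (auto intro: member_le_sum)
  next
    case (Suc n)
    then have "\<forall>s. \<bar>F (x (Suc n)) s - F (x n) s\<bar> \<le> c * (c^n * C)"
      using cF unfolding contr_def by blast
    then show ?case by (simp add: xs[of "Suc n"] xs[of n] mult.assoc)
  qed
  define D where "D = C / (1 - c)"
  have D0: "D \<ge> 0" unfolding D_def using C0 c1 by auto
  have tail0: "\<bar>x (n+k) s - x n s\<bar> \<le> c^n * C * (1 - c^k) / (1 - c)" for n k s
  proof (induction k)
    case 0 then show ?case by simp
  next
    case (Suc k)
    have "\<bar>x (n + Suc k) s - x n s\<bar> \<le> \<bar>x (Suc (n+k)) s - x (n+k) s\<bar> + \<bar>x (n+k) s - x n s\<bar>"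
      by simp
    also have "\<dots> \<le> c^(n+k) * C + c^n * C * (1 - c^k) / (1 - c)"
      using step Suc by (meson add_mono)
    also have "\<dots> = c^n * C * (1 - c^Suc k) / (1 - c)"
      using c1 by (simp add: field_simps power_add)
    finally show ?case .
  qed
  have tail: "\<bar>x (n+k) s - x n s\<bar> \<le> c^n * D" for n k s
  proof -
    have "c^n * C * (1 - c^k) / (1 - c) \<le> c^n * D"
      unfolding D_def using c0 c1 C0
      by (simp add: divide_right_mono mult_left_le mult_nonneg_nonneg)
    then show ?thesis using tail0[of n k s] by linarith
  qed
  have cau: "Cauchy (\<lambda>n. x n s)" for s
  proof (rule CauchyI)
    fix e :: real assume e: "0 < e"
    obtain M where M: "c^M < e / (2*D+1)"
      using real_arch_pow_inv[of "e/(2*D+1)" c] e D0 c1 by auto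
    have "2 * D * c^M \<le> (2*D+1) * c^M" using c0 by (intro mult_right_mono) auto
    also have "\<dots> < e" using M D0 by (simp add: field_simps)
    finally have ME: "2 * D * c^M < e" .
    show "\<exists>M. \<forall>m\<ge>M. \<forall>n\<ge>M. norm (x m s - x n s) < e"
    proof (intro exI allI impI)
      fix m n assume "M \<le> m" "M \<le> n"
      then have "\<bar>x m s - x M s\<bar> \<le> c^M * D" "\<bar>x n s - x M s\<bar> \<le> c^M * D"
        using tail[of M "m - M" s] tail[of M "n - M" s] by auto
      then show "norm (x m s - x n s) < e" using ME by (simp add: abs_le_iff abs_less_iff) (auto simp: algebra_simps)
    qed
  qed
  define W where "W s = lim (\<lambda>n. x n s)" for s
  have conv: "(\<lambda>n. x n s) \<longlonglongrightarrow> W s" for s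
    using cau[of s] unfolding W_def Cauchy_convergent_iff convergent_LIMSEQ_iff by simp
  have wb: "\<bar>W s - x n s\<bar> \<le> c^n * D" for n s
  proof (rule LIMSEQ_le_const2)
    show "(\<lambda>m. \<bar>x m s - x n s\<bar>) \<longlonglongrightarrow> \<bar>W s - x n s\<bar>"
      by (intro tendsto_intros conv)
    show "\<exists>N. \<forall>m\<ge>N. \<bar>x m s - x n s\<bar> \<le> c ^ n * D"
      using tail[of n _ s] by (metis le_add_diff_inverse)
  qed
  have "F W = W"
  proof
    fix s
    have "\<forall>n. \<bar>F W s - W s\<bar> \<le> c^n * (2 * c * D)"
    proof
      fix n
      have "\<forall>t. \<bar>W t - x n t\<bar> \<le> c^n * D" using wb by blast
      then have "\<bar>F W s - F (x n) s\<bar> \<le> c * (c^n * D)" using cF unfolding contr_def by blast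
      moreover have "\<bar>W s - x (Suc n) s\<bar> \<le> c^(Suc n) * D" using wb by blast
      ultimately show "\<bar>F W s - W s\<bar> \<le> c^n * (2 * c * D)"
        using xs[of n] by (simp add: field_simps) 
    qed
    then have "\<bar>F W s - W s\<bar> \<le> 0" using pow_bound_zero c0 c1 by blast
    then show "F W s = W s" by simp
  qed
  then show ?thesis by blast
qed


lemma E_integrable: "integrable (measure_pmf (p :: ('x::finite) pmf)) (f :: 'x \<Rightarrow> real)"
  by (rule integrable_measure_pmf_finite) simp

lemma E_mono: "(\<And>x. f x \<le> g x) \<Longrightarrow> measure_pmf.expectation (p :: ('x::finite) pmf) f \<le> measure_pmf.expectation p (g :: 'x \<Rightarrow> real)"
  by (intro integral_mono E_integrable)

lemma E_add_const: "measure_pmf.expectation (p :: ('x::finite) pmf) (\<lambda>x. f x + c) = measure_pmf.expectation p f + (c::real)"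
  by (subst Bochner_Integration.integral_add) (auto intro: E_integrable)

lemma E_const: "measure_pmf.expectation (p :: ('x::finite) pmf) (\<lambda>x. c) = (c::real)"
  by simp

lemma E_le_const: "(\<And>x. f x \<le> c) \<Longrightarrow> measure_pmf.expectation (p :: ('x::finite) pmf) f \<le> (c::real)"
  using E_mono[of f "\<lambda>_. c" p] by simp

definition Qf :: "('s \<Rightarrow> 'a \<Rightarrow> 's pmf) \<Rightarrow> real \<Rightarrow> ('s \<Rightarrow> 'a \<Rightarrow> 's \<Rightarrow> real) \<Rightarrow> ('s \<Rightarrow> real) \<Rightarrow> 's \<Rightarrow> 'a \<Rightarrow> real" where
  "Qf tau \<gamma> R V s a = measure_pmf.expectation (tau s a) (\<lambda>s'. R s a s' + \<gamma> * V s')"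

definition Tp :: "('s \<Rightarrow> 'a \<Rightarrow> 's pmf) \<Rightarrow> real \<Rightarrow> ('s \<Rightarrow> 'a \<Rightarrow> 's \<Rightarrow> real) \<Rightarrow> ('s \<Rightarrow> 'a pmf) \<Rightarrow> ('s \<Rightarrow> real) \<Rightarrow> 's \<Rightarrow> real" where
  "Tp tau \<gamma> R \<pi> V s = measure_pmf.expectation (\<pi> s) (\<lambda>a. Qf tau \<gamma> R V s a)"

definition To :: "('s \<Rightarrow> 'a \<Rightarrow> 's pmf) \<Rightarrow> real \<Rightarrow> ('s \<Rightarrow> 'a \<Rightarrow> 's \<Rightarrow> real) \<Rightarrow> ('s \<Rightarrow> real) \<Rightarrow> 's \<Rightarrow> real" where
  "To tau \<gamma> R V s = Max (range (Qf tau \<gamma> R V s))"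

lemma Qf_le:
  fixes tau :: "'s::finite \<Rightarrow> 'a \<Rightarrow> 's pmf"
  assumes "0 \<le> \<gamma>" "\<forall>t. U t - V t \<le> m"
  shows "Qf tau \<gamma> R U s a \<le> Qf tau \<gamma> R V s a + \<gamma> * m"
proof -
  have "\<And>t. R s a t + \<gamma> * U t \<le> (R s a t + \<gamma> * V t) + \<gamma> * m"
    using assms mult_left_mono[of "U _ - V _" m \<gamma>] by (auto simp: algebra_simps)
  then have "measure_pmf.expectation (tau s a) (\<lambda>t. R s a t + \<gamma> * U t) \<le> measure_pmf.expectation (tau s a) (\<lambda>t. (R s a t + \<gamma> * V t) + \<gamma> * m)"
    by (intro E_mono)
  also have "\<dots> = measure_pmf.expectation (tau s a) (\<lambda>t. R s a t + \<gamma> * V t) + \<gamma> * m"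
    by (rule E_add_const)
  finally show ?thesis unfolding Qf_def .
qed

lemma Tp_le:
  fixes tau :: "'s::finite \<Rightarrow> 'a::finite \<Rightarrow> 's pmf"
  assumes "0 \<le> \<gamma>" "\<forall>t. U t - V t \<le> m"
  shows "Tp tau \<gamma> R \<pi> U s \<le> Tp tau \<gamma> R \<pi> V s + \<gamma> * m"
proof -
  have "Tp tau \<gamma> R \<pi> U s \<le> measure_pmf.expectation (\<pi> s) (\<lambda>a. Qf tau \<gamma> R V s a + \<gamma> * m)"
    unfolding Tp_def using Qf_le[OF assms] by (intro E_mono)
  also have "\<dots> = Tp tau \<gamma> R \<pi> V s + \<gamma> * m" unfolding Tp_def by (rule E_add_const)
  finally show ?thesis .
qed

lemma Max_diff_le:
  fixes f g :: "'a::finite \<Rightarrow> real"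
  assumes "\<forall>a. f a \<le> g a + m"
  shows "Max (range f) \<le> Max (range g) + m"
proof -
  have "Max (range f) \<in> range f" by (rule Max_in) auto
  then obtain a where "Max (range f) = f a" by blast
  moreover have "g a \<le> Max (range g)" by simp
  ultimately show ?thesis using assms[rule_format, of a] by linarith
qed

lemma To_le:
  fixes tau :: "'s::finite \<Rightarrow> 'a::finite \<Rightarrow> 's pmf"
  assumes "0 \<le> \<gamma>" "\<forall>t. U t - V t \<le> m"
  shows "To tau \<gamma> R U s \<le> To tau \<gamma> R V s + \<gamma> * m"
  unfolding To_def using Qf_le[OF assms] by (intro Max_diff_le) auto

lemma contr_Tp:
  fixes tau :: "'s::finite \<Rightarrow> 'a::finite \<Rightarrow> 's pmf"
  assumes "0 \<le> \<gamma>"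
  shows "contr (Tp tau \<gamma> R \<pi>) \<gamma>"
  unfolding contr_def
proof (intro allI impI)
  fix U V :: "'s \<Rightarrow> real" and B s assume h: "\<forall>s. \<bar>U s - V s\<bar> \<le> B"
  have "\<forall>t. U t - V t \<le> B" "\<forall>t. V t - U t \<le> B" using h by (auto simp: abs_le_iff)
  then show "\<bar>Tp tau \<gamma> R \<pi> U s - Tp tau \<gamma> R \<pi> V s\<bar> \<le> \<gamma> * B"
    using Tp_le[OF assms \<open>\<forall>t. U t - V t \<le> B\<close>, where tau=tau and R=R and \<pi>=\<pi> and s=s] Tp_le[OF assms \<open>\<forall>t. V t - U t \<le> B\<close>, where tau=tau and R=R and \<pi>=\<pi> and s=s] by (auto simp: abs_le_iff)
qed

lemma contr_To:
  fixes tau :: "'s::finite \<Rightarrow> 'a::finite \<Rightarrow> 's pmf"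
  assumes "0 \<le> \<gamma>"
  shows "contr (To tau \<gamma> R) \<gamma>"
  unfolding contr_def
proof (intro allI impI)
  fix U V :: "'s \<Rightarrow> real" and B s assume h: "\<forall>s. \<bar>U s - V s\<bar> \<le> B"
  have "\<forall>t. U t - V t \<le> B" "\<forall>t. V t - U t \<le> B" using h by (auto simp: abs_le_iff)
  then show "\<bar>To tau \<gamma> R U s - To tau \<gamma> R V s\<bar> \<le> \<gamma> * B"
    using To_le[OF assms \<open>\<forall>t. U t - V t \<le> B\<close>, where tau=tau and R=R and s=s] To_le[OF assms \<open>\<forall>t. V t - U t \<le> B\<close>, where tau=tau and R=R and s=s] by (auto simp: abs_le_iff)
qed

lemma value_n_iter: "value_n tau \<gamma> R \<pi> n = (Tp tau \<gamma> R \<pi> ^^ n) (\<lambda>_. 0)"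
proof (induction n)
  case 0 show ?case by (rule ext) simp
next
  case (Suc n)
  have "(Tp tau \<gamma> R \<pi> ^^ Suc n) (\<lambda>_. 0) = Tp tau \<gamma> R \<pi> (value_n tau \<gamma> R \<pi> n)"
    using Suc.IH by simp
  also have "\<dots> = value_n tau \<gamma> R \<pi> (Suc n)"
    by (rule ext) (simp only: Tp_def Qf_def value_n.simps)
  finally show ?case by simp
qed

lemma value_fun_fix:
  fixes tau :: "'s::finite \<Rightarrow> 'a::finite \<Rightarrow> 's pmf"
  assumes "0 \<le> \<gamma>" "\<gamma> < 1" "Tp tau \<gamma> R \<pi> V = V"
  shows "value_fun tau \<gamma> R \<pi> = V"
proof
  fix s
  define B where "B = (\<Sum>t\<in>UNIV. \<bar>0 - V t\<bar>)"
  have hB: "\<forall>t. \<bar>0 - V t\<bar> \<le> B"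
    unfolding B_def by (intro allI member_le_sum) auto
  have bd: "\<bar>value_n tau \<gamma> R \<pi> n s - V s\<bar> \<le> \<gamma>^n * B" for n
    unfolding value_n_iter using iter_bound[OF contr_Tp[OF assms(1)] assms(3) hB] .
  have lim0: "(\<lambda>n. \<gamma>^n * B) \<longlonglongrightarrow> 0"
    using assms(1,2) by (intro tendsto_mult_left_zero LIMSEQ_power_zero) simp
  have "(\<lambda>n. value_n tau \<gamma> R \<pi> n s - V s) \<longlonglongrightarrow> 0"
  proof (rule Lim_null_comparison[OF _ lim0])
    show "\<forall>\<^sub>F n in sequentially. norm (value_n tau \<gamma> R \<pi> n s - V s) \<le> \<gamma>^n * B"
      using bd by (simp add: always_eventually)
  qed
  then have "(\<lambda>n. value_n tau \<gamma> R \<pi> n s) \<longlonglongrightarrow> V s"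
    by (simp only: LIM_zero_iff)
  then show "value_fun tau \<gamma> R \<pi> s = V s" unfolding value_fun_def by (rule limI)
qed

lemma key:
  fixes tau :: "'s::finite \<Rightarrow> 'a::finite \<Rightarrow> 's pmf"
  assumes g0: "0 \<le> \<gamma>" and g1: "\<gamma> < 1" and W: "To tau \<gamma> R W = W"
  shows "opt_value tau \<gamma> R = W"
proof -
  have le: "value_fun tau \<gamma> R \<pi> s \<le> W s" for \<pi> s
  proof -
    obtain V where V: "Tp tau \<gamma> R \<pi> V = V" using fix_exists[OF g0 g1 contr_Tp[OF g0]] by blast
    have vf: "value_fun tau \<gamma> R \<pi> = V" using value_fun_fix[OF g0 g1 V] .
    define m where "m = Max (range (\<lambda>t. V t - W t))"
    have mge: "\<forall>t. V t - W t \<le> m" unfolding m_def by simp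
    have TpW: "Tp tau \<gamma> R \<pi> W t \<le> W t" for t
    proof -
      have "Tp tau \<gamma> R \<pi> W t \<le> To tau \<gamma> R W t"
        unfolding Tp_def To_def by (intro E_le_const) simp
      then show ?thesis using W by simp
    qed
    have "\<forall>t. V t - W t \<le> \<gamma> * m"
    proof
      fix t
      have "V t = Tp tau \<gamma> R \<pi> V t" using V by simp
      also have "\<dots> \<le> Tp tau \<gamma> R \<pi> W t + \<gamma> * m" using Tp_le[OF g0 mge] .
      finally show "V t - W t \<le> \<gamma> * m" using TpW[of t] by simp
    qed
    moreover have "m \<in> range (\<lambda>t. V t - W t)" unfolding m_def by (rule Max_in) auto
    then obtain t0 where "m = V t0 - W t0" by auto
    ultimately have "m \<le> \<gamma> * m" by simp
    then have "(1 - \<gamma>) * m \<le> 0" by (simp add: algebra_simps)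
    then have "m \<le> 0" using g1 by (simp add: mult_le_0_iff)
    then show ?thesis using mge[rule_format, of s] vf by simp
  qed
  define \<pi>0 where "\<pi>0 s = return_pmf (SOME a. Qf tau \<gamma> R W s a = To tau \<gamma> R W s)" for s
  have "Tp tau \<gamma> R \<pi>0 W = W"
  proof
    fix s
    have "Max (range (Qf tau \<gamma> R W s)) \<in> range (Qf tau \<gamma> R W s)" by (rule Max_in) auto
    then obtain a1 where "Max (range (Qf tau \<gamma> R W s)) = Qf tau \<gamma> R W s a1" by blast
    then have "\<exists>a. Qf tau \<gamma> R W s a = To tau \<gamma> R W s"
      unfolding To_def by metis
    then have "Qf tau \<gamma> R W s (SOME a. Qf tau \<gamma> R W s a = To tau \<gamma> R W s) = To tau \<gamma> R W s"
      by (rule someI_ex)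
    then show "Tp tau \<gamma> R \<pi>0 W s = W s" unfolding Tp_def \<pi>0_def using W by simp
  qed
  then have v0: "value_fun tau \<gamma> R \<pi>0 = W" using value_fun_fix[OF g0 g1] by blast
  show ?thesis
  proof
    fix s
    show "opt_value tau \<gamma> R s = W s" unfolding opt_value_def
      by (rule cSup_eq_maximum) (use le v0 in auto)
  qed
qed

lemma exists_opt:
  fixes tau :: "'s::finite \<Rightarrow> 'a::finite \<Rightarrow> 's pmf"
  assumes g0: "0 \<le> \<gamma>" and g1: "\<gamma> < 1"
  shows "To tau \<gamma> R (opt_value tau \<gamma> R) = opt_value tau \<gamma> R"
proof -
  obtain W where W: "To tau \<gamma> R W = W" using fix_exists[OF g0 g1 contr_To[OF g0]] by blast
  then have "opt_value tau \<gamma> R = W" by (rule key[OF g0 g1])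
  then show ?thesis using W by simp
qed

lemma opt_actions_char:
  fixes tau :: "'s::finite \<Rightarrow> 'a::finite \<Rightarrow> 's pmf"
  assumes g0: "0 \<le> \<gamma>" and g1: "\<gamma> < 1"
  shows "opt_actions tau \<gamma> R s = {a. Qf tau \<gamma> R (opt_value tau \<gamma> R) s a = opt_value tau \<gamma> R s}"
    and "Qf tau \<gamma> R (opt_value tau \<gamma> R) s a \<le> opt_value tau \<gamma> R s"
    and "opt_actions tau \<gamma> R s \<noteq> {}"
proof -
  let ?V = "opt_value tau \<gamma> R" let ?Q = "Qf tau \<gamma> R ?V s"
  have "To tau \<gamma> R ?V s = ?V s" using exists_opt[OF g0 g1, where R=R and tau=tau] by simp
  then have V: "?V s = Max (range ?Q)" unfolding To_def by simp
  have adv: "opt_adv tau \<gamma> R s b = ?Q b - ?V s" for b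
    unfolding opt_adv_def opt_Q_def Qf_def by simp
  have le: "?Q b \<le> ?V s" for b using V by simp
  show "?Q a \<le> ?V s" by (rule le)
  have "Max (range ?Q) \<in> range ?Q" by (rule Max_in) auto
  then obtain a0 where "Max (range ?Q) = ?Q a0" by blast
  then have a0: "?Q a0 = ?V s" using V by simp
  show "opt_actions tau \<gamma> R s = {a. ?Q a = ?V s}"
  proof (intro set_eqI iffI)
    fix x assume "x \<in> opt_actions tau \<gamma> R s"
    then have "\<forall>b. ?Q b - ?V s \<le> ?Q x - ?V s" unfolding opt_actions_def adv by simp
    then have "?Q a0 \<le> ?Q x" by auto
    then show "x \<in> {x. ?Q x = ?V s}" using a0 le[of x] by simp
  next
    fix x assume "x \<in> {x. ?Q x = ?V s}"
    then have "?Q b \<le> ?Q x" for b using le[of b] by simp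
    then show "x \<in> opt_actions tau \<gamma> R s" unfolding opt_actions_def adv by simp
  qed
  then show "opt_actions tau \<gamma> R s \<noteq> {}" using a0 by auto
qed


lemma traj_cong:
  assumes "\<forall>m xs s. xs \<in> set_pmf (traj_prefix tau \<pi>1 m d) \<longrightarrow> s \<in> fst ` set xs \<longrightarrow> \<pi>1 s = \<pi>2 s"
  shows "traj_prefix tau \<pi>1 n d = traj_prefix tau \<pi>2 n d"
  using assms
proof (induction n arbitrary: d)
  case 0 then show ?case by simp
next
  case (Suc n)
  have ps: "\<pi>1 s = \<pi>2 s" if s: "s \<in> set_pmf d" for s
  proof -
    obtain a where a: "a \<in> set_pmf (\<pi>1 s)" using set_pmf_not_empty by fast
    have 1: "[(s,a)] \<in> set_pmf (traj_prefix tau \<pi>1 (Suc 0) d)" using s a by auto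
    have 2: "s \<in> fst ` set [(s,a)]" by simp
    show ?thesis using Suc.prems 1 2 by blast
  qed
  have rest: "traj_prefix tau \<pi>1 n (tau s a) = traj_prefix tau \<pi>2 n (tau s a)"
    if s: "s \<in> set_pmf d" and a: "a \<in> set_pmf (\<pi>1 s)" for s a
  proof (rule Suc.IH, intro allI impI)
    fix m xs t assume xs: "xs \<in> set_pmf (traj_prefix tau \<pi>1 m (tau s a))" and t: "t \<in> fst ` set xs"
    have "(s,a) # xs \<in> set_pmf (traj_prefix tau \<pi>1 (Suc m) d)" using s a xs by auto
    moreover have "t \<in> fst ` set ((s,a) # xs)" using t by auto
    ultimately show "\<pi>1 t = \<pi>2 t" using Suc.prems by blast
  qed
  show ?case
    by (simp only: traj_prefix.simps, intro bind_pmf_cong refl)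
       (use ps rest in auto)
qed

lemma traj_pol:
  "xs \<in> set_pmf (traj_prefix tau \<pi> n d) \<Longrightarrow> (s,a) \<in> set xs \<Longrightarrow> a \<in> set_pmf (\<pi> s)"
proof (induction n arbitrary: d xs)
  case 0 then show ?case by simp
next
  case (Suc n) then show ?case by auto
qed

lemma traj_complete:
  "xs \<in> set_pmf (traj_prefix tau \<pi> n d) \<Longrightarrow> s \<in> fst ` set xs \<Longrightarrow> a \<in> set_pmf (\<pi> s)
   \<Longrightarrow> \<exists>ys \<in> set_pmf (traj_prefix tau \<pi> n d). (s,a) \<in> set ys"
proof (induction n arbitrary: d xs)
  case 0 then show ?case by simp
next
  case (Suc n)
  from Suc.prems(1) obtain s0 a0 rest where s0: "s0 \<in> set_pmf d" and a0: "a0 \<in> set_pmf (\<pi> s0)"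
    and rest: "rest \<in> set_pmf (traj_prefix tau \<pi> n (tau s0 a0))" and xs: "xs = (s0,a0) # rest"
    by auto
  show ?case
  proof (cases "s = s0")
    case True
    obtain r where r: "r \<in> set_pmf (traj_prefix tau \<pi> n (tau s0 a))" using set_pmf_not_empty by fast
    have "(s0,a) # r \<in> set_pmf (traj_prefix tau \<pi> (Suc n) d)" using s0 r Suc.prems(3) True by auto
    then show ?thesis using True by force
  next
    case False
    then have "s \<in> fst ` set rest" using Suc.prems(2) xs by auto
    then obtain ys where ys: "ys \<in> set_pmf (traj_prefix tau \<pi> n (tau s0 a0))" "(s,a) \<in> set ys"
      using Suc.IH[OF rest _ Suc.prems(3)] by blast
    have "(s0,a0) # ys \<in> set_pmf (traj_prefix tau \<pi> (Suc n) d)" using s0 a0 ys by auto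
    then show ?thesis using ys by force
  qed
qed

theorem theorem3p8:
  fixes tau :: "'s::finite \<Rightarrow> 'a::finite \<Rightarrow> 's pmf"
    and mu0 :: "'s pmf"
    and \<gamma> :: real
    and g :: "'a set \<Rightarrow> 'a pmf"
    and R R' :: "'s \<Rightarrow> 'a \<Rightarrow> 's \<Rightarrow> real"
  assumes "0 < \<gamma>" and "\<gamma> < 1"
    and "selection_rule g"
  shows "traj_dist g tau mu0 \<gamma> R = traj_dist g tau mu0 \<gamma> R' \<longleftrightarrow>
         (\<exists>Ob \<in> admissible_O g tau mu0 \<gamma> R. opt_preserving tau \<gamma> Ob R R')"
proof -
  have g0: "0 \<le> \<gamma>" and g1: "\<gamma> < 1" using assms by auto
  have sel: "set_pmf (g B) = B" if "B \<noteq> {}" for B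
    using assms(3) that unfolding selection_rule_def by blast
  define \<pi>1 where "\<pi>1 = ms_policy g tau \<gamma> R"
  define \<pi>2 where "\<pi>2 = ms_policy g tau \<gamma> R'"
  have td1: "traj_dist g tau mu0 \<gamma> R n = traj_prefix tau \<pi>1 n mu0" for n
    unfolding traj_dist_def \<pi>1_def ..
  have td2: "traj_dist g tau mu0 \<gamma> R' n = traj_prefix tau \<pi>2 n mu0" for n
    unfolding traj_dist_def \<pi>2_def ..
  have vis: "visited_states g tau mu0 \<gamma> R =
     {s. \<exists>n. \<exists>xs \<in> set_pmf (traj_prefix tau \<pi>1 n mu0). s \<in> fst ` set xs}"
    unfolding visited_states_def td1 ..
  show ?thesis
  proof
    assume eq: "traj_dist g tau mu0 \<gamma> R = traj_dist g tau mu0 \<gamma> R'"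
    then have eqn: "traj_prefix tau \<pi>1 n mu0 = traj_prefix tau \<pi>2 n mu0" for n
      using td1 td2 by metis
    have same: "opt_actions tau \<gamma> R s = opt_actions tau \<gamma> R' s"
      if s: "s \<in> visited_states g tau mu0 \<gamma> R" for s
    proof -
      obtain n xs where xs: "xs \<in> set_pmf (traj_prefix tau \<pi>1 n mu0)" and sx: "s \<in> fst ` set xs"
        using s unfolding vis by blast
      have xs2: "xs \<in> set_pmf (traj_prefix tau \<pi>2 n mu0)" using xs eqn by simp
      have "set_pmf (\<pi>1 s) \<subseteq> set_pmf (\<pi>2 s)"
      proof
        fix a assume "a \<in> set_pmf (\<pi>1 s)"
        then obtain ys where "ys \<in> set_pmf (traj_prefix tau \<pi>1 n mu0)" "(s,a) \<in> set ys"
          using traj_complete[OF xs sx] by blast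
        then show "a \<in> set_pmf (\<pi>2 s)" using traj_pol eqn by metis
      qed
      moreover have "set_pmf (\<pi>2 s) \<subseteq> set_pmf (\<pi>1 s)"
      proof
        fix a assume "a \<in> set_pmf (\<pi>2 s)"
        then obtain ys where "ys \<in> set_pmf (traj_prefix tau \<pi>2 n mu0)" "(s,a) \<in> set ys"
          using traj_complete[OF xs2 sx] by blast
        then show "a \<in> set_pmf (\<pi>1 s)" using traj_pol eqn by metis
      qed
      ultimately have "set_pmf (\<pi>1 s) = set_pmf (\<pi>2 s)" by blast
      then show ?thesis
        unfolding \<pi>1_def \<pi>2_def ms_policy_def
        using sel opt_actions_char(3)[OF g0 g1, where tau=tau and R=R and s=s] opt_actions_char(3)[OF g0 g1, where tau=tau and R=R' and s=s] by metis
    qed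
    define Ob where "Ob = opt_actions tau \<gamma> R'"
    have adm: "Ob \<in> admissible_O g tau mu0 \<gamma> R"
      unfolding admissible_O_def Ob_def using same opt_actions_char(3)[OF g0 g1, where tau=tau and R=R'] by auto
    have "opt_preserving tau \<gamma> Ob R R'"
      unfolding opt_preserving_def
    proof (intro exI allI conjI)
      fix s a
      show "measure_pmf.expectation (tau s a) (\<lambda>s'. R' s a s' + \<gamma> * opt_value tau \<gamma> R' s') \<le> opt_value tau \<gamma> R' s"
        using opt_actions_char(2)[OF g0 g1, of tau R' s a] unfolding Qf_def .
      show "(measure_pmf.expectation (tau s a) (\<lambda>s'. R' s a s' + \<gamma> * opt_value tau \<gamma> R' s') = opt_value tau \<gamma> R' s) = (a \<in> Ob s)"
        using opt_actions_char(1)[OF g0 g1, of tau R' s] unfolding Qf_def Ob_def by auto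
    qed
    then show "\<exists>Ob \<in> admissible_O g tau mu0 \<gamma> R. opt_preserving tau \<gamma> Ob R R'" using adm by blast
  next
    assume "\<exists>Ob \<in> admissible_O g tau mu0 \<gamma> R. opt_preserving tau \<gamma> Ob R R'"
    then obtain Ob \<Psi> where adm: "Ob \<in> admissible_O g tau mu0 \<gamma> R"
      and P: "\<And>s a. Qf tau \<gamma> R' \<Psi> s a \<le> \<Psi> s \<and> (Qf tau \<gamma> R' \<Psi> s a = \<Psi> s \<longleftrightarrow> a \<in> Ob s)"
      unfolding opt_preserving_def Qf_def by blast
    have ne: "Ob s \<noteq> {}" for s using adm unfolding admissible_O_def by blast
    have fixp: "To tau \<gamma> R' \<Psi> = \<Psi>"
    proof
      fix s
      obtain a where a: "a \<in> Ob s" using ne by blast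
      show "To tau \<gamma> R' \<Psi> s = \<Psi> s" unfolding To_def
      proof (rule Max_eqI)
        show "\<Psi> s \<in> range (Qf tau \<gamma> R' \<Psi> s)" using P[of s a] a by (metis rangeI)
      qed (use P in auto)
    qed
    have ov: "opt_value tau \<gamma> R' = \<Psi>" by (rule key[OF g0 g1 fixp])
    have oa: "opt_actions tau \<gamma> R' s = Ob s" for s
      using opt_actions_char(1)[OF g0 g1, of tau R' s] P[of s] unfolding ov by auto
    have "\<pi>1 s = \<pi>2 s" if "s \<in> visited_states g tau mu0 \<gamma> R" for s
      using adm that oa unfolding admissible_O_def \<pi>1_def \<pi>2_def ms_policy_def by auto
    then have "traj_prefix tau \<pi>1 n mu0 = traj_prefix tau \<pi>2 n mu0" for n
      by (intro traj_cong) (auto simp: vis)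
    then show "traj_dist g tau mu0 \<gamma> R = traj_dist g tau mu0 \<gamma> R'"
      using td1 td2 by auto
  qed
qed

end
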